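(* Let $\{\ket{j}\}_{j=0}^{7}$ be the computational basis of three qubits, where $\ket{j}=\ket{j_1j_2j_3}$ with $j=4j_1+2j_2+j_3$, and let $$\ket{\psi_4}=-\frac{1}{8\sqrt{2}}\left(\ket{0}+\ket{1}+\ket{2}+\ket{3}+\ket{4}+\ket{5}+\ket{6}-11\ket{7}\right),\qquad \rho_4=\ket{\psi_4}\bra{\psi_4}.$$ Denote by $A_4,B_4,C_4$ the first, second and third qubits of $\rho_4$. Then $$D(B_4C_4|A_4)=D(A_4C_4|B_4)=D(A_4B_4|C_4)=D(C_4|A_4B_4)=D(B_4|A_4C_4)=D(A_4|B_4C_4)$$ $$=-\tfrac{1}{32}(16+\sqrt{229})\log\left(\tfrac{1}{32}(16+\sqrt{229})\right)-\tfrac{1}{32}(16-\sqrt{229})\log\left(\tfrac{1}{32}(16-\sqrt{229})\right)\approx 0.17,$$ and moreover $D(B_4C_4|A_4)=S(\rho_{A_4})$ and $D(C_4|A_4B_4)=S(\rho_{A_4B_4})$.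
   Context: Logarithms are base 2, and $S(\sigma)=-\mathrm{Tr}(\sigma\log\sigma)$ is the von Neumann entropy; $\rho_{A_4}$ and $\rho_{A_4B_4}$ denote the reduced states of $\rho_4$ on the first qubit and on the first two qubits. For a state $\rho_{XY}$ on a bipartite system $X\otimes Y$ (here $X$ and $Y$ are complementary groups of the three qubits), the quantum discord with measurement on $X$ is $$D(Y|X)=\min_{\{E_a\}}\sum_a p_a S(\rho_{Y|a})+S(\rho_X)-S(\rho_{XY}),$$ where the minimum is over all POVMs $\{E_a\}$ on $X$ ($E_a\ge 0$, $\sum_a E_a=I$), $p_a=\mathrm{Tr}((E_a\otimes I)\rho_{XY})$, $\rho_{Y|a}=\mathrm{Tr}_X((E_a\otimes I)\rho_{XY})/p_a$, and $\rho_X,\rho_Y$ are reduced states. *)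

theory Defs
  imports Complex_Main "Jordan_Normal_Form.Char_Poly" "HOL-Computational_Algebra.Polynomial"
begin

definition mtrace :: "complex mat \<Rightarrow> complex" where
  "mtrace M = (\<Sum>i<dim_row M. M $$ (i, i))"

definition psd :: "nat \<Rightarrow> complex mat \<Rightarrow> bool" where
  "psd d E \<longleftrightarrow> E \<in> carrier_mat d d \<and>
     (\<forall>v \<in> carrier_vec d. let q = conjugate v \<bullet> (E *\<^sub>v v) in q \<in> \<real> \<and> Re q \<ge> 0)"

definition povm :: "nat \<Rightarrow> complex mat list \<Rightarrow> bool" where
  "povm d Es \<longleftrightarrow> (\<forall>E \<in> set Es. psd d E) \<and>
     (\<forall>i<d. \<forall>j<d. (\<Sum>a<length Es. (Es ! a) $$ (i, j)) = (1\<^sub>m d :: complex mat) $$ (i, j))"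

(* von Neumann entropy (log base 2): -sum of lambda log lambda over the eigenvalues
   (roots of the characteristic polynomial, with multiplicity); note 0 * log 2 0 = 0 *)
definition vn_entropy :: "complex mat \<Rightarrow> real" where
  "vn_entropy \<sigma> = - (\<Sum>x\<in>#proots (char_poly \<sigma>). Re x * log 2 (Re x))"

(* bipartite system X (x) Y, dims dX, dY, index i = a * dY + b *)
definition ptrace_X :: "nat \<Rightarrow> nat \<Rightarrow> complex mat \<Rightarrow> complex mat" where
  "ptrace_X dX dY M = mat dY dY (\<lambda>(b, b'). \<Sum>a<dX. M $$ (a * dY + b, a * dY + b'))"

definition ptrace_Y :: "nat \<Rightarrow> nat \<Rightarrow> complex mat \<Rightarrow> complex mat" where
  "ptrace_Y dX dY M = mat dX dX (\<lambda>(a, a'). \<Sum>b<dY. M $$ (a * dY + b, a' * dY + b))"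

definition kron_id :: "nat \<Rightarrow> nat \<Rightarrow> complex mat \<Rightarrow> complex mat" where
  "kron_id dX dY E = mat (dX * dY) (dX * dY)
     (\<lambda>(i, i'). if i mod dY = i' mod dY then E $$ (i div dY, i' div dY) else 0)"

(* quantum discord D(Y|X) of rho_XY, measurement on X; the "min" is rendered as Inf *)
definition discord :: "nat \<Rightarrow> nat \<Rightarrow> complex mat \<Rightarrow> real" where
  "discord dX dY R =
     Inf {(\<Sum>a<length Es.
            let M = kron_id dX dY (Es ! a) * R;
                p = Re (mtrace M)
            in p * vn_entropy ((1 / complex_of_real p) \<cdot>\<^sub>m ptrace_X dX dY M)) | Es. povm dX Es}
     + vn_entropy (ptrace_Y dX dY R) - vn_entropy R"

(* three qubits: |j> = |j1 j2 j3>, j = 4 j1 + 2 j2 + j3; qubit k in {0,1,2} has bit j div 2^(2-k) mod 2 *)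
definition qbit :: "nat \<Rightarrow> nat \<Rightarrow> nat" where
  "qbit j k = (j div 2 ^ (2 - k)) mod 2"

(* reorder the qubits as ks (a permutation of [0,1,2]): local index i has, at position m,
   the bit of qubit ks!m; returns the corresponding global index *)
definition perm_index :: "nat list \<Rightarrow> nat \<Rightarrow> nat" where
  "perm_index ks i = (\<Sum>m<3. qbit i m * 2 ^ (2 - ks ! m))"

definition reorder :: "nat list \<Rightarrow> complex mat \<Rightarrow> complex mat" where
  "reorder ks \<rho> = mat 8 8 (\<lambda>(i, i'). \<rho> $$ (perm_index ks i, perm_index ks i'))"

(* D(Y|X) for a three-qubit state, X and Y complementary lists of qubits (in increasing order) *)
definition discord3 :: "nat list \<Rightarrow> nat list \<Rightarrow> complex mat \<Rightarrow> real" where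
  "discord3 Y X \<rho> = discord (2 ^ length X) (2 ^ length Y) (reorder (X @ Y) \<rho>)"

definition psi4 :: "complex vec" where
  "psi4 = vec 8 (\<lambda>j. - 1 / (8 * sqrt 2) * (if j = 7 then -11 else 1))"

definition rho4 :: "complex mat" where
  "rho4 = mat 8 8 (\<lambda>(i, j). psi4 $ i * cnj (psi4 $ j))"

definition rho_A4 :: "complex mat" where
  "rho_A4 = ptrace_Y 2 4 rho4"

definition rho_A4B4 :: "complex mat" where
  "rho_A4B4 = ptrace_Y 4 2 rho4"

end

theory Submission
  imports Defs "Jordan_Normal_Form.Schur_Decomposition"
begin

lemma mtrace_mult_comm:
  assumes "A \<in> carrier_mat n n" "B \<in> carrier_mat n n"
  shows "mtrace (A*B) = mtrace (B*A)"
proof -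
  have "mtrace (A*B) = (\<Sum>i<n. \<Sum>j<n. A$$(i,j) * B$$(j,i))"
    using assms unfolding mtrace_def by (simp add: scalar_prod_def atLeast0LessThan)
  also have "\<dots> = (\<Sum>j<n. \<Sum>i<n. B$$(j,i) * A$$(i,j))"
    by (subst sum.swap) (simp add: mult.commute)
  also have "\<dots> = mtrace (B*A)"
    using assms unfolding mtrace_def by (simp add: scalar_prod_def atLeast0LessThan)
  finally show ?thesis .
qed

lemma proots_lin_prod: "proots (\<Prod>a\<leftarrow>as. [:- a, 1:]) = mset (as :: complex list)"
proof (induction as)
  case Nil then show ?case by simp
next
  case (Cons a as)
  have nz: "(\<Prod>a\<leftarrow>as. [:- a, 1:]) \<noteq> 0" by (auto simp: prod_list_zero_iff)
  have e: "(\<Prod>a\<leftarrow>a#as. [:- a, 1:]) = [:-a,1:] * (\<Prod>a\<leftarrow>as. [:- a, 1:])" by simp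
  have "proots (\<Prod>a\<leftarrow>a#as. [:- a, 1:]) = proots [:- a, 1:] + proots (\<Prod>a\<leftarrow>as. [:- a, 1:])"
    unfolding e by (rule proots_mult) (use nz in auto)
  then show ?case using Cons by simp
qed

lemma char_poly_roots_trace:
  fixes A :: "complex mat" assumes A: "A \<in> carrier_mat n n"
  shows "\<exists>as. proots (char_poly A) = mset as \<and> length as = n \<and> sum_list as = mtrace A"
proof -
  obtain as where cp: "char_poly A = (\<Prod>a\<leftarrow>as. [:-a,1:])" and len: "length as = n"
    using char_poly_factorized[OF A] by blast
  obtain B P Q where sd: "schur_decomposition A as = (B,P,Q)"
    by (cases "schur_decomposition A as") auto
  from schur_decomposition[OF A cp sd] have sim: "similar_mat_wit A B P Q" and dg: "diag_mat B = as"
    by auto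
  from sim A have car: "B \<in> carrier_mat n n" "P \<in> carrier_mat n n" "Q \<in> carrier_mat n n"
    and QP: "Q*P = 1\<^sub>m n" and AE: "A = P*B*Q" unfolding similar_mat_wit_def Let_def by auto
  have "mtrace A = mtrace (P*(B*Q))" using AE car by (simp add: assoc_mult_mat[of P n n B n Q n])
  also have "\<dots> = mtrace ((B*Q)*P)" by (rule mtrace_mult_comm) (use car in auto)
  also have "\<dots> = mtrace B" using car QP by (simp add: assoc_mult_mat[of B n n Q n P n])
  also have "mtrace B = sum_list as" using dg car unfolding mtrace_def diag_mat_def
    by (auto simp: sum_list_sum_nth atLeast0LessThan)
  finally show ?thesis using cp len proots_lin_prod by auto
qed

lemma char_poly_nz: assumes A: "(A::complex mat) \<in> carrier_mat n n" shows "char_poly A \<noteq> 0"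
  using degree_monic_char_poly[OF A] by (metis leading_coeff_0_iff one_neq_zero)

lemma root_eigvec:
  fixes A :: "complex mat" assumes A: "A \<in> carrier_mat n n" and x: "x \<in># proots (char_poly A)"
  shows "\<exists>v \<in> carrier_vec n. v \<noteq> 0\<^sub>v n \<and> A *\<^sub>v v = x \<cdot>\<^sub>v v"
proof -
  have "poly (char_poly A) x = 0" using x char_poly_nz[OF A] by simp
  then have "eigenvalue A x" using eigenvalue_root_char_poly[OF A] by simp
  then show ?thesis using A unfolding eigenvalue_def eigenvector_def by auto
qed

lemma psd_eig_real:
  fixes A :: "complex mat" assumes A: "A \<in> carrier_mat n n" and P: "psd n A"
    and v: "v \<in> carrier_vec n" "v \<noteq> 0\<^sub>v n" and ev: "A *\<^sub>v v = x \<cdot>\<^sub>v v"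
  shows "Im x = 0 \<and> Re x \<ge> 0"
proof -
  define q where "q = conjugate v \<bullet> (A *\<^sub>v v)"
  have qr: "q \<in> \<real>" "Re q \<ge> 0" using P v unfolding psd_def q_def Let_def by auto
  define c where "c = conjugate v \<bullet> v"
  have "c = v \<bullet>c v" unfolding c_def using conjugate_vec_sprod_comm[OF v(1) v(1)] by simp
  then have c0: "c \<ge> 0" "c \<noteq> 0" using v conjugate_square_eq_0_vec[OF v(1)] by auto
  have cI: "Im c = 0" "Re c > 0" using c0 by (auto simp: less_eq_complex_def complex_eq_iff)
  have qx: "q = x * c" unfolding q_def c_def ev using v by simp
  have qI: "Im q = 0" using qr(1) by (simp add: complex_is_Real_iff)
  from qx qI cI have "Im x = 0" by (simp add: algebra_simps)
  moreover from qx cI this have "Re q = Re x * Re c" by simp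
  ultimately show ?thesis using qr(2) cI by (simp add: zero_le_mult_iff)
qed

lemma xlogx_nonpos: assumes "0 \<le> (t::real)" "t \<le> 1" shows "t * log 2 t \<le> 0"
proof (cases "t = 0")
  case False
  then have "log 2 t \<le> 0" using assms by simp
  then show ?thesis using assms by (simp add: mult_nonneg_nonpos)
qed simp

lemma entropy_nonneg:
  fixes A :: "complex mat" assumes A: "A \<in> carrier_mat n n" and P: "psd n A" and tr: "mtrace A = 1"
  shows "vn_entropy A \<ge> 0"
proof -
  obtain as where pr: "proots (char_poly A) = mset as" and sl: "sum_list as = mtrace A"
    using char_poly_roots_trace[OF A] by blast
  have rx: "Im x = 0 \<and> Re x \<ge> 0" if "x \<in> set as" for x
  proof -
    have "x \<in># proots (char_poly A)" using that pr by simp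
    then obtain v where "v \<in> carrier_vec n" "v \<noteq> 0\<^sub>v n" "A *\<^sub>v v = x \<cdot>\<^sub>v v"
      using root_eigvec[OF A] by blast
    then show ?thesis using psd_eig_real[OF A P] by blast
  qed
  have "Re (sum_list xs) = sum_list (map Re xs)" for xs :: "complex list" by (induction xs) auto
  then have s1: "sum_list (map Re as) = 1" using sl tr by (metis one_complex.sel(1))
  have le1: "Re x \<le> 1" if "x \<in> set as" for x
  proof -
    have "Re x \<le> sum_list (map Re as)"
      by (rule member_le_sum_list) (use that rx in auto)
    then show ?thesis using s1 by simp
  qed
  have "(\<Sum>x\<in>#proots (char_poly A). Re x * log 2 (Re x)) = sum_list (map (\<lambda>x. Re x * log 2 (Re x)) as)"
    unfolding pr by (metis mset_map sum_mset_sum_list)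
  also have "\<dots> \<le> 0"
    by (rule sum_list_nonpos) (use rx le1 xlogx_nonpos in auto)
  finally show ?thesis unfolding vn_entropy_def by simp
qed

lemma idem_entropy_zero:
  fixes A :: "complex mat" assumes A: "A \<in> carrier_mat n n" and idem: "A * A = A"
  shows "vn_entropy A = 0"
proof -
  have "Re x * log 2 (Re x) = 0" if x: "x \<in># proots (char_poly A)" for x
  proof -
    obtain v where v: "v \<in> carrier_vec n" "v \<noteq> 0\<^sub>v n" "A *\<^sub>v v = x \<cdot>\<^sub>v v"
      using root_eigvec[OF A x] by blast
    have "A *\<^sub>v (A *\<^sub>v v) = (A * A) *\<^sub>v v" using A v by (simp add: assoc_mult_mat_vec)
    then have "x \<cdot>\<^sub>v (x \<cdot>\<^sub>v v) = x \<cdot>\<^sub>v v" using idem v A by (simp add: mult_mat_vec)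
    obtain i where i: "i < n" "v $ i \<noteq> 0" using v(1,2) by (metis eq_vecI carrier_vecD index_zero_vec(1,2))
    have "(x \<cdot>\<^sub>v (x \<cdot>\<^sub>v v)) $ i = (x \<cdot>\<^sub>v v) $ i" using \<open>x \<cdot>\<^sub>v (x \<cdot>\<^sub>v v) = x \<cdot>\<^sub>v v\<close> by simp
    then have "x * x * v $ i = x * v $ i" using i v by simp
    then have "x * x = x" using i(2) by simp
    then have "x = 0 \<or> x = 1" by (metis mult_cancel_left1 mult_zero_left)
    then show ?thesis by auto
  qed
  then have "image_mset (\<lambda>x. Re x * log 2 (Re x)) (proots (char_poly A)) = image_mset (\<lambda>_. 0) (proots (char_poly A))"
    by (intro image_mset_cong) auto
  then show ?thesis unfolding vn_entropy_def by simp
qed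


lemma idx_lt: "a < (dX::nat) \<Longrightarrow> b < dY \<Longrightarrow> a * dY + b < dX * dY"
proof -
  assume "a < dX" "b < dY"
  then have "a * dY + b < a * dY + dY" by simp
  also have "\<dots> = Suc a * dY" by simp
  also have "\<dots> \<le> dX * dY" using \<open>a < dX\<close> by (intro mult_le_mono1) simp
  finally show ?thesis .
qed

lemma sum_shift_blk: fixes f :: "nat \<Rightarrow> 'a::comm_monoid_add"
  shows "sum f {m..<m+k} = (\<Sum>d<k. f (m + d))"
  using sum.shift_bounds_nat_ivl[where g=f and m=0 and k=m and n=k]
  by (simp add: atLeast0LessThan add.commute)

lemma sum_split_div: fixes f :: "nat \<Rightarrow> 'a::comm_monoid_add" shows "(\<Sum>k<dX*dY. f k) = (\<Sum>c<dX. \<Sum>d<dY. f (c*dY + d))"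
proof -
  have "(\<Sum>k<dX*dY. f k) = (\<Sum>c<dX. sum f {c*dY..<c*dY+dY})"
    using sum.nat_group[of f dY dX] by simp
  also have "\<dots> = (\<Sum>c<dX. \<Sum>d<dY. f (c*dY + d))"
    by (simp add: sum_shift_blk)
  finally show ?thesis .
qed

lemma kron_R_entry:
  assumes E: "E \<in> carrier_mat dX dX" and a: "a < dX" and b: "b < dY" and i': "i' < dX * dY"
  shows "(kron_id dX dY E * mat (dX*dY) (dX*dY) (\<lambda>(i,j). \<phi> i * cnj (\<phi> j))) $$ (a*dY+b, i')
     = (\<Sum>c<dX. E$$(a,c) * \<phi>(c*dY+b)) * cnj (\<phi> i')"
proof -
  have ab: "a*dY+b < dX*dY" using idx_lt[OF a b] .
  have "(kron_id dX dY E * mat (dX*dY) (dX*dY) (\<lambda>(i,j). \<phi> i * cnj (\<phi> j))) $$ (a*dY+b, i')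
      = (\<Sum>k<dX*dY. (if (a*dY+b) mod dY = k mod dY then E $$ ((a*dY+b) div dY, k div dY) else 0) * (\<phi> k * cnj (\<phi> i')))"
    using ab i' by (simp add: kron_id_def scalar_prod_def atLeast0LessThan)
  also have "\<dots> = (\<Sum>c<dX. \<Sum>d<dY. (if b = d then E $$ (a, c) else 0) * (\<phi> (c*dY+d) * cnj (\<phi> i')))"
    unfolding sum_split_div using b by (intro sum.cong refl) auto
  also have "\<dots> = (\<Sum>c<dX. E $$ (a, c) * (\<phi> (c*dY+b) * cnj (\<phi> i')))"
    using b by (simp add: if_distrib[of "\<lambda>x. x * _"] sum.delta cong: if_cong)
  also have "\<dots> = (\<Sum>c<dX. E$$(a,c) * \<phi>(c*dY+b)) * cnj (\<phi> i')"
    by (simp add: sum_distrib_right mult.assoc)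
  finally show ?thesis .
qed

lemma ptrace_kron_pure:
  assumes E: "E \<in> carrier_mat dX dX"
  shows "ptrace_X dX dY (kron_id dX dY E * mat (dX*dY) (dX*dY) (\<lambda>(i,j). \<phi> i * cnj (\<phi> j)))
     = mat dY dY (\<lambda>(b,b'). \<Sum>a<dX. \<Sum>c<dX. E$$(a,c) * \<phi>(c*dY+b) * cnj(\<phi>(a*dY+b')))"
proof (rule eq_matI)
  fix b b' assume "b < dim_row (mat dY dY (\<lambda>(b,b'). \<Sum>a<dX. \<Sum>c<dX. E$$(a,c) * \<phi>(c*dY+b) * cnj(\<phi>(a*dY+b'))))"
    "b' < dim_col (mat dY dY (\<lambda>(b,b'). \<Sum>a<dX. \<Sum>c<dX. E$$(a,c) * \<phi>(c*dY+b) * cnj(\<phi>(a*dY+b'))))"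
  then have b: "b < dY" "b' < dY" by auto
  have "ptrace_X dX dY (kron_id dX dY E * mat (dX*dY) (dX*dY) (\<lambda>(i,j). \<phi> i * cnj (\<phi> j))) $$ (b, b')
     = (\<Sum>a<dX. (\<Sum>c<dX. E$$(a,c) * \<phi>(c*dY+b)) * cnj (\<phi> (a*dY+b')))"
  proof -
    have "\<And>a. a \<in> {..<dX} \<Longrightarrow> (kron_id dX dY E * mat (dX*dY) (dX*dY) (\<lambda>(i,j). \<phi> i * cnj (\<phi> j))) $$ (a*dY+b, a*dY+b')
      = (\<Sum>c<dX. E$$(a,c) * \<phi>(c*dY+b)) * cnj (\<phi> (a*dY+b'))"
      using kron_R_entry[OF E _ b(1) idx_lt] b by auto
    then have "(\<Sum>a<dX. (kron_id dX dY E * mat (dX*dY) (dX*dY) (\<lambda>(i,j). \<phi> i * cnj (\<phi> j))) $$ (a*dY+b, a*dY+b'))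
      = (\<Sum>a<dX. (\<Sum>c<dX. E$$(a,c) * \<phi>(c*dY+b)) * cnj (\<phi> (a*dY+b')))"
      by (rule sum.cong[OF refl])
    then show ?thesis unfolding ptrace_X_def using b by simp
  qed
  also have "\<dots> = (\<Sum>a<dX. \<Sum>c<dX. E$$(a,c) * \<phi>(c*dY+b) * cnj(\<phi>(a*dY+b')))"
    by (simp add: sum_distrib_right)
  finally show "ptrace_X dX dY (kron_id dX dY E * mat (dX*dY) (dX*dY) (\<lambda>(i,j). \<phi> i * cnj (\<phi> j))) $$ (b, b')
     = mat dY dY (\<lambda>(b,b'). \<Sum>a<dX. \<Sum>c<dX. E$$(a,c) * \<phi>(c*dY+b) * cnj(\<phi>(a*dY+b'))) $$ (b, b')"
    using b by simp
qed (auto simp: ptrace_X_def)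

lemma mtrace_ptrace_X:
  assumes "M \<in> carrier_mat (dX*dY) (dX*dY)"
  shows "mtrace M = mtrace (ptrace_X dX dY M)"
proof -
  have "mtrace M = (\<Sum>a<dX. \<Sum>b<dY. M $$ (a*dY+b, a*dY+b))"
    using assms unfolding mtrace_def by (simp add: sum_split_div)
  also have "\<dots> = (\<Sum>b<dY. \<Sum>a<dX. M $$ (a*dY+b, a*dY+b))" by (rule sum.swap)
  also have "\<dots> = mtrace (ptrace_X dX dY M)" unfolding mtrace_def ptrace_X_def by simp
  finally show ?thesis .
qed

lemma swap4:
  fixes T :: "nat \<Rightarrow> nat \<Rightarrow> nat \<Rightarrow> nat \<Rightarrow> 'z::comm_monoid_add"
  shows "(\<Sum>b<m. \<Sum>b'<m. \<Sum>a<k. \<Sum>c<k. T a c b b') = (\<Sum>a<k. \<Sum>c<k. \<Sum>b<m. \<Sum>b'<m. T a c b b')"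
proof -
  have "(\<Sum>b<m. \<Sum>b'<m. \<Sum>a<k. \<Sum>c<k. T a c b b') = (\<Sum>b<m. \<Sum>a<k. \<Sum>b'<m. \<Sum>c<k. T a c b b')"
    by (rule sum.cong[OF refl], rule sum.swap)
  also have "\<dots> = (\<Sum>a<k. \<Sum>b<m. \<Sum>b'<m. \<Sum>c<k. T a c b b')" by (rule sum.swap)
  also have "\<dots> = (\<Sum>a<k. \<Sum>b<m. \<Sum>c<k. \<Sum>b'<m. T a c b b')"
    by (rule sum.cong[OF refl], rule sum.cong[OF refl], rule sum.swap)
  also have "\<dots> = (\<Sum>a<k. \<Sum>c<k. \<Sum>b<m. \<Sum>b'<m. T a c b b')"
    by (rule sum.cong[OF refl], rule sum.swap)
  finally show ?thesis .
qed

lemma quad_N: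
  assumes E: "E \<in> carrier_mat dX dX" and v: "v \<in> carrier_vec dY"
  shows "conjugate v \<bullet> (mat dY dY (\<lambda>(b,b'). \<Sum>a<dX. \<Sum>c<dX. E$$(a,c) * \<phi>(c*dY+b) * cnj(\<phi>(a*dY+b'))) *\<^sub>v v)
    = conjugate (vec dX (\<lambda>c. \<Sum>b<dY. cnj (v$b) * \<phi>(c*dY+b))) \<bullet> (E *\<^sub>v vec dX (\<lambda>c. \<Sum>b<dY. cnj (v$b) * \<phi>(c*dY+b)))"
proof -
  have "conjugate v \<bullet> (mat dY dY (\<lambda>(b,b'). \<Sum>a<dX. \<Sum>c<dX. E$$(a,c) * \<phi>(c*dY+b) * cnj(\<phi>(a*dY+b'))) *\<^sub>v v)
     = (\<Sum>b<dY. \<Sum>b'<dY. \<Sum>a<dX. \<Sum>c<dX. cnj (v$b) * E$$(a,c) * \<phi>(c*dY+b) * cnj(\<phi>(a*dY+b')) * v$b')"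
    using v by (simp add: scalar_prod_def sum_distrib_left sum_distrib_right mult_ac atLeast0LessThan)
  also have "\<dots> = (\<Sum>a<dX. \<Sum>c<dX. \<Sum>b<dY. \<Sum>b'<dY. cnj (v$b) * E$$(a,c) * \<phi>(c*dY+b) * cnj(\<phi>(a*dY+b')) * v$b')"
    by (rule swap4)
  also have "\<dots> = conjugate (vec dX (\<lambda>c. \<Sum>b<dY. cnj (v$b) * \<phi>(c*dY+b))) \<bullet> (E *\<^sub>v vec dX (\<lambda>c. \<Sum>b<dY. cnj (v$b) * \<phi>(c*dY+b)))"
    using E by (simp add: scalar_prod_def sum_distrib_left sum_distrib_right mult_ac atLeast0LessThan)
  finally show ?thesis .
qed

lemma smult_mat_vec: "dim_vec v = dim_col A \<Longrightarrow> (c \<cdot>\<^sub>m A) *\<^sub>v v = c \<cdot>\<^sub>v (A *\<^sub>v (v::'a::comm_ring_1 vec))"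
  by (intro eq_vecI) (auto simp: scalar_prod_def sum_distrib_left mult.assoc)

lemma psd_real_nonneg: "psd n E \<Longrightarrow> w \<in> carrier_vec n \<Longrightarrow> conjugate w \<bullet> (E *\<^sub>v w) \<in> \<real> \<and> Re (conjugate w \<bullet> (E *\<^sub>v w)) \<ge> 0"
  unfolding psd_def Let_def by auto

lemma term_nonneg:
  assumes P: "psd dX E"
  shows "(let M = kron_id dX dY E * mat (dX*dY) (dX*dY) (\<lambda>(i,j). \<phi> i * cnj (\<phi> j));
              p = Re (mtrace M)
          in p * vn_entropy ((1 / complex_of_real p) \<cdot>\<^sub>m ptrace_X dX dY M)) \<ge> 0"
proof -
  have E: "E \<in> carrier_mat dX dX" using P unfolding psd_def by auto
  define M where "M = kron_id dX dY E * mat (dX*dY) (dX*dY) (\<lambda>(i,j). \<phi> i * cnj (\<phi> j))"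
  define N where "N = mat dY dY (\<lambda>(b,b'). \<Sum>a<dX. \<Sum>c<dX. E$$(a,c) * \<phi>(c*dY+b) * cnj(\<phi>(a*dY+b')))"
  have NM: "ptrace_X dX dY M = N" unfolding M_def N_def by (rule ptrace_kron_pure[OF E])
  have Mc: "M \<in> carrier_mat (dX*dY) (dX*dY)" unfolding M_def kron_id_def by (rule mult_carrier_mat) auto
  have Nc: "N \<in> carrier_mat dY dY" unfolding N_def by simp
  have psdN: "psd dY N"
    unfolding psd_def Let_def
  proof (intro conjI ballI Nc)
    fix v :: "complex vec" assume v: "v \<in> carrier_vec dY"
    show "conjugate v \<bullet> (N *\<^sub>v v) \<in> \<real>" "0 \<le> Re (conjugate v \<bullet> (N *\<^sub>v v))"
      unfolding N_def quad_N[OF E v] using psd_real_nonneg[OF P] by auto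
  qed
  have diag: "N $$ (b,b) \<in> \<real> \<and> Re (N $$ (b,b)) \<ge> 0" if b: "b < dY" for b
  proof -
    have "N $$ (b,b) = conjugate (vec dX (\<lambda>c. \<phi>(c*dY+b))) \<bullet> (E *\<^sub>v vec dX (\<lambda>c. \<phi>(c*dY+b)))"
      unfolding N_def using b E by (simp add: scalar_prod_def sum_distrib_left mult_ac atLeast0LessThan)
    then show ?thesis using psd_real_nonneg[OF P] by auto
  qed
  have trN: "mtrace N \<in> \<real>" "Re (mtrace N) \<ge> 0"
    using diag Nc unfolding mtrace_def by (auto intro!: sum_in_Reals sum_nonneg)
  define p where "p = Re (mtrace M)"
  have pN: "mtrace N = complex_of_real p" "p \<ge> 0"
    unfolding p_def mtrace_ptrace_X[OF Mc] NM using trN by (auto simp: complex_is_Real_iff complex_eq_iff)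
  have "p * vn_entropy ((1 / complex_of_real p) \<cdot>\<^sub>m N) \<ge> 0"
  proof (cases "p = 0")
    case False
    then have pp: "p > 0" using pN by simp
    let ?c = "1 / complex_of_real p"
    have "psd dY (?c \<cdot>\<^sub>m N)"
      unfolding psd_def Let_def
    proof (intro conjI ballI)
      show "?c \<cdot>\<^sub>m N \<in> carrier_mat dY dY" using Nc by simp
      fix v :: "complex vec" assume v: "v \<in> carrier_vec dY"
      have e: "conjugate v \<bullet> ((?c \<cdot>\<^sub>m N) *\<^sub>v v) = ?c * (conjugate v \<bullet> (N *\<^sub>v v))"
        using v Nc by (simp add: smult_mat_vec)
      have q: "conjugate v \<bullet> (N *\<^sub>v v) \<in> \<real>" "Re (conjugate v \<bullet> (N *\<^sub>v v)) \<ge> 0"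
        using psdN v unfolding psd_def Let_def by auto
      then obtain r where r: "conjugate v \<bullet> (N *\<^sub>v v) = complex_of_real r" "r \<ge> 0"
        by (metis Reals_cases Re_complex_of_real)
      show "conjugate v \<bullet> ((?c \<cdot>\<^sub>m N) *\<^sub>v v) \<in> \<real>" "0 \<le> Re (conjugate v \<bullet> ((?c \<cdot>\<^sub>m N) *\<^sub>v v))"
        unfolding e r(1) using r(2) pp by auto
    qed
    moreover have "mtrace (?c \<cdot>\<^sub>m N) = 1"
      using Nc pN pp unfolding mtrace_def by (simp add: sum_divide_distrib[symmetric])
    ultimately have "vn_entropy (?c \<cdot>\<^sub>m N) \<ge> 0"
      using Nc by (intro entropy_nonneg[of _ dY]) auto
    then show ?thesis using pp by simp
  qed simp
  then show ?thesis unfolding M_def[symmetric] p_def[symmetric] Let_def NM .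
qed


lemma rank1_idem:
  fixes f :: "nat \<Rightarrow> complex"
  assumes "c * (\<Sum>k<n. f k * cnj (f k)) = 1"
  shows "mat n n (\<lambda>(i,j). c * (f i * cnj (f j))) * mat n n (\<lambda>(i,j). c * (f i * cnj (f j)))
       = mat n n (\<lambda>(i,j). c * (f i * cnj (f j)))"
proof (rule eq_matI)
  fix i j assume ij: "i < dim_row (mat n n (\<lambda>(i,j). c * (f i * cnj (f j))))"
    "j < dim_col (mat n n (\<lambda>(i,j). c * (f i * cnj (f j))))"
  have "(mat n n (\<lambda>(i,j). c * (f i * cnj (f j))) * mat n n (\<lambda>(i,j). c * (f i * cnj (f j)))) $$ (i,j)
     = (c * (f i * cnj (f j))) * (c * (\<Sum>k<n. f k * cnj (f k)))"
    using ij by (simp add: scalar_prod_def sum_distrib_left mult_ac atLeast0LessThan)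
  then show "(mat n n (\<lambda>(i,j). c * (f i * cnj (f j))) * mat n n (\<lambda>(i,j). c * (f i * cnj (f j)))) $$ (i,j)
     = mat n n (\<lambda>(i,j). c * (f i * cnj (f j))) $$ (i,j)" using assms ij by simp
qed auto

definition basis_povm :: "nat \<Rightarrow> complex mat list" where
  "basis_povm d = map (\<lambda>a. mat d d (\<lambda>(i,j). if i = a \<and> j = a then 1 else 0)) [0..<d]"

lemma basis_povm: "povm d (basis_povm d)"
  unfolding povm_def
proof (intro conjI ballI allI impI)
  fix E assume "E \<in> set (basis_povm d)"
  then obtain a where a: "a < d" and E: "E = mat d d (\<lambda>(i,j). if i = a \<and> j = a then 1 else 0)"
    unfolding basis_povm_def by auto
  show "psd d E" unfolding psd_def Let_def
  proof (intro conjI ballI)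
    show "E \<in> carrier_mat d d" unfolding E by simp
    fix v :: "complex vec" assume v: "v \<in> carrier_vec d"
    have "conjugate v \<bullet> (E *\<^sub>v v) = cnj (v $ a) * v $ a"
    proof -
      have inner: "(\<Sum>ia = 0..<d. (if i = a \<and> ia = a then 1 else 0) * v $ ia) = (if i = a then v $ a else 0)" for i
        using a by (cases "i = a") (auto simp: if_distrib[of "\<lambda>x. x * _"] cong: if_cong)
      have "(\<Sum>i = 0..<d. cnj (v $ i) * (if i = a then v $ a else 0)) = cnj (v $ a) * v $ a"
        using a by (simp add: if_distrib[of "\<lambda>x. _ * x"] cong: if_cong)
      then show ?thesis unfolding E using v a by (simp add: scalar_prod_def inner)
    qed
    also have "\<dots> = complex_of_real ((cmod (v $ a))\<^sup>2)"
      by (simp add: complex_norm_square mult.commute del: of_real_power)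
    finally show "conjugate v \<bullet> (E *\<^sub>v v) \<in> \<real>" "0 \<le> Re (conjugate v \<bullet> (E *\<^sub>v v))" by auto
  qed
next
  fix i j assume ij: "i < d" "j < d"
  show "(\<Sum>a<length (basis_povm d). basis_povm d ! a $$ (i, j)) = (1\<^sub>m d :: complex mat) $$ (i, j)"
    unfolding basis_povm_def using ij by (simp add: sum.delta cong: if_cong)
qed

lemma double_delta:
  fixes F :: "nat \<Rightarrow> nat \<Rightarrow> complex"
  assumes a: "a < d"
  shows "(\<Sum>a'<d. \<Sum>c<d. (if a' = a \<and> c = a then 1 else 0) * F a' c) = F a a"
proof -
  have "(\<Sum>c<d. (if a' = a \<and> c = a then 1 else 0) * F a' c) = (if a' = a then F a a else 0)" for a'
    using a by (cases "a' = a") (auto simp: if_distrib[of "\<lambda>x. x * _"] cong: if_cong)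
  then show ?thesis using a by simp
qed

lemma term_zero:
  assumes a: "a < dX"
  shows "(let M = kron_id dX dY (basis_povm dX ! a) * mat (dX*dY) (dX*dY) (\<lambda>(i,j). \<phi> i * cnj (\<phi> j));
              p = Re (mtrace M)
          in p * vn_entropy ((1 / complex_of_real p) \<cdot>\<^sub>m ptrace_X dX dY M)) = 0"
proof -
  define E where "E = basis_povm dX ! a"
  have Edef: "E = mat dX dX (\<lambda>(i,j). if i = a \<and> j = a then 1 else 0)"
    unfolding E_def basis_povm_def using a by simp
  have E: "E \<in> carrier_mat dX dX" unfolding Edef by simp
  define f where "f b = \<phi> (a*dY+b)" for b
  define M where "M = kron_id dX dY E * mat (dX*dY) (dX*dY) (\<lambda>(i,j). \<phi> i * cnj (\<phi> j))"
  define N where "N = mat dY dY (\<lambda>(b,b'). f b * cnj (f b'))"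
  have NM: "ptrace_X dX dY M = N"
    unfolding M_def ptrace_kron_pure[OF E] N_def
  proof (rule eq_matI)
    fix b b' assume "b < dim_row (mat dY dY (\<lambda>(b, b'). f b * cnj (f b')))" "b' < dim_col (mat dY dY (\<lambda>(b, b'). f b * cnj (f b')))"
    then have b: "b < dY" "b' < dY" by auto
    have "(\<Sum>a'<dX. \<Sum>c<dX. E $$ (a', c) * \<phi> (c * dY + b) * cnj (\<phi> (a' * dY + b')))
        = (\<Sum>a'<dX. \<Sum>c<dX. (if a' = a \<and> c = a then 1 else 0) * (\<phi> (c * dY + b) * cnj (\<phi> (a' * dY + b'))))"
      unfolding Edef by (intro sum.cong refl) (simp add: mult.assoc)
    also have "\<dots> = f b * cnj (f b')" unfolding f_def by (rule double_delta[OF a])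
    finally show "mat dY dY (\<lambda>(b, b'). \<Sum>a'<dX. \<Sum>c<dX. E $$ (a', c) * \<phi> (c * dY + b) * cnj (\<phi> (a' * dY + b'))) $$ (b, b')
      = mat dY dY (\<lambda>(b, b'). f b * cnj (f b')) $$ (b, b')" using b by simp
  qed auto
  have Mc: "M \<in> carrier_mat (dX*dY) (dX*dY)" unfolding M_def kron_id_def by (rule mult_carrier_mat) auto
  define p where "p = Re (mtrace M)"
  have sN: "mtrace N = (\<Sum>k<dY. f k * cnj (f k))" unfolding N_def mtrace_def by simp
  have sr: "(\<Sum>k<dY. f k * cnj (f k)) = complex_of_real (\<Sum>k<dY. (cmod (f k))\<^sup>2)"
    by (simp add: complex_norm_square del: of_real_power)
  have pN: "mtrace N = complex_of_real p"
    unfolding p_def mtrace_ptrace_X[OF Mc] NM sN sr by simp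
  have "p * vn_entropy ((1 / complex_of_real p) \<cdot>\<^sub>m N) = 0"
  proof (cases "p = 0")
    case False
    let ?c = "1 / complex_of_real p"
    have cs: "?c * (\<Sum>k<dY. f k * cnj (f k)) = 1" using pN sN False by simp
    have eq: "?c \<cdot>\<^sub>m N = mat dY dY (\<lambda>(i,j). ?c * (f i * cnj (f j)))"
      unfolding N_def by (rule eq_matI) auto
    have "vn_entropy (?c \<cdot>\<^sub>m N) = 0"
      unfolding eq by (rule idem_entropy_zero[of _ dY], simp, rule rank1_idem[OF cs])
    then show ?thesis by simp
  qed simp
  then show ?thesis unfolding E_def[symmetric] M_def[symmetric] p_def[symmetric] Let_def NM .
qed

lemma discord_pure:
  "discord dX dY (mat (dX*dY) (dX*dY) (\<lambda>(i,j). \<phi> i * cnj (\<phi> j)))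
   = vn_entropy (ptrace_Y dX dY (mat (dX*dY) (dX*dY) (\<lambda>(i,j). \<phi> i * cnj (\<phi> j))))
     - vn_entropy (mat (dX*dY) (dX*dY) (\<lambda>(i,j). \<phi> i * cnj (\<phi> j)))"
proof -
  let ?R = "mat (dX*dY) (dX*dY) (\<lambda>(i,j). \<phi> i * cnj (\<phi> j))"
  let ?S = "{(\<Sum>a<length Es.
            let M = kron_id dX dY (Es ! a) * ?R;
                p = Re (mtrace M)
            in p * vn_entropy ((1 / complex_of_real p) \<cdot>\<^sub>m ptrace_X dX dY M)) | Es. povm dX Es}"
  have "0 \<in> ?S"
  proof -
    have "(\<Sum>a<length (basis_povm dX).
            let M = kron_id dX dY (basis_povm dX ! a) * ?R;
                p = Re (mtrace M)
            in p * vn_entropy ((1 / complex_of_real p) \<cdot>\<^sub>m ptrace_X dX dY M)) = 0"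
    proof (intro sum.neutral ballI)
      have len: "length (basis_povm dX) = dX" unfolding basis_povm_def by simp
      fix a assume "a \<in> {..<length (basis_povm dX)}"
      then have "a < dX" using len by simp
      then show "(let M = kron_id dX dY (basis_povm dX ! a) * ?R; p = Re (mtrace M)
            in p * vn_entropy ((1 / complex_of_real p) \<cdot>\<^sub>m ptrace_X dX dY M)) = 0"
        by (rule term_zero)
    qed
    then show ?thesis using basis_povm[of dX] by (intro CollectI exI[of _ "basis_povm dX"]) simp
  qed
  moreover have "0 \<le> x" if "x \<in> ?S" for x
  proof -
    obtain Es where Es: "povm dX Es" and x: "x = (\<Sum>a<length Es.
            let M = kron_id dX dY (Es ! a) * ?R;
                p = Re (mtrace M)
            in p * vn_entropy ((1 / complex_of_real p) \<cdot>\<^sub>m ptrace_X dX dY M))" using \<open>x \<in> ?S\<close> by blast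
    show ?thesis unfolding x
    proof (rule sum_nonneg)
      fix a assume "a \<in> {..<length Es}"
      then have "psd dX (Es ! a)" using Es unfolding povm_def by auto
      then show "0 \<le> (let M = kron_id dX dY (Es ! a) * ?R; p = Re (mtrace M)
            in p * vn_entropy ((1 / complex_of_real p) \<cdot>\<^sub>m ptrace_X dX dY M))"
        by (rule term_nonneg)
    qed
  qed
  ultimately have "Inf ?S = 0" by (intro cInf_eq_minimum) auto
  then show ?thesis unfolding discord_def by simp
qed


lemma sum_list_3:
  fixes g :: "'a \<Rightarrow> 'b::comm_semiring_1"
  assumes "set xs \<subseteq> {P,Q,Z}" "P \<noteq> Q" "P \<noteq> Z" "Q \<noteq> Z"
  shows "sum_list (map g xs) = of_nat (count_list xs P) * g P + of_nat (count_list xs Q) * g Q + of_nat (count_list xs Z) * g Z"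
  using assms by (induction xs) (auto simp: algebra_simps)

definition Lp :: real where "Lp = (16 + sqrt 229) / 32"
definition Lm :: real where "Lm = (16 - sqrt 229) / 32"

lemma s229: "sqrt 229 * sqrt 229 = (229::real)" by simp

lemma Lpm_ne: "Lp \<noteq> Lm" "Lp \<noteq> 0" "Lm \<noteq> 0"
proof -
  have s: "sqrt 229 > (15::real)" by (rule real_less_rsqrt) simp
  have s2: "sqrt 229 < (16::real)" by (rule real_sqrt_less_mono[of 229 256, simplified]) 
  show "Lp \<noteq> Lm" "Lp \<noteq> 0" "Lm \<noteq> 0" unfolding Lp_def Lm_def using s s2 by auto
qed

lemma Lpm_pos: "0 < Lp" "0 < Lm"
proof -
  have s2: "sqrt 229 < (16::real)" by (rule real_sqrt_less_mono[of 229 256, simplified])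
  show "0 < Lp" "0 < Lm" unfolding Lp_def Lm_def using s2 by (auto simp: add_pos_nonneg)
qed

lemma mult_enum:
  fixes mp mm :: nat
  assumes "mp \<le> 4" "mm \<le> 4" "(int mp - int mm) * (int mp - int mm) * 229 = (32 - 16 * (int mp + int mm)) * (32 - 16 * (int mp + int mm))"
  shows "mp = mm"
proof -
  have "mp \<in> {0,1,2,3,4}" "mm \<in> {0,1,2,3,4}" using assms(1,2) by auto
  then show ?thesis using assms(3) by auto
qed

lemma spectral_fin:
  fixes A :: "complex mat"
  assumes A: "A \<in> carrier_mat n n" and n: "n \<le> 4" and tr: "mtrace A = 1"
    and roots: "\<And>x. x \<in># proots (char_poly A) \<Longrightarrow> x = complex_of_real Lp \<or> x = complex_of_real Lm \<or> x = 0"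
  shows "vn_entropy A = - Lp * log 2 Lp - Lm * log 2 Lm"
proof -
  obtain as where pr: "proots (char_poly A) = mset as" and len: "length as = n" and sl: "sum_list as = mtrace A"
    using char_poly_roots_trace[OF A] by blast
  let ?P = "complex_of_real Lp" and ?Q = "complex_of_real Lm"
  have set: "set as \<subseteq> {?P, ?Q, 0}" using roots pr by auto
  have ne: "?P \<noteq> ?Q" "?P \<noteq> 0" "?Q \<noteq> 0" using Lpm_ne by auto
  define mp where "mp = count_list as ?P"
  define mm where "mm = count_list as ?Q"
  have bnd: "mp \<le> 4" "mm \<le> 4" unfolding mp_def mm_def using count_le_length[of as] len n by (metis order_trans)+
  have "sum_list (map id as) = of_nat mp * ?P + of_nat mm * ?Q + of_nat (count_list as 0) * 0"
    unfolding mp_def mm_def using sum_list_3[OF set ne, of id] by simp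
  then have "complex_of_real (real mp * Lp + real mm * Lm) = 1" using sl tr by simp
  then have eq: "real mp * Lp + real mm * Lm = 1" by (metis of_real_eq_1_iff)
  then have eq2: "real_of_int (int mp - int mm) * sqrt 229 = real_of_int (32 - 16 * (int mp + int mm))"
    unfolding Lp_def Lm_def by (simp add: field_simps)
  then have "real_of_int ((int mp - int mm) * (int mp - int mm) * 229) = real_of_int ((32 - 16 * (int mp + int mm)) * (32 - 16 * (int mp + int mm)))"
  proof -
    have "real_of_int ((int mp - int mm) * (int mp - int mm) * 229)
        = (real_of_int (int mp - int mm) * sqrt 229) * (real_of_int (int mp - int mm) * sqrt 229)"
      by (simp add: algebra_simps)
    also have "\<dots> = real_of_int ((32 - 16 * (int mp + int mm)) * (32 - 16 * (int mp + int mm)))"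
      unfolding eq2 by simp
    finally show ?thesis .
  qed
  then have "mp = mm" using mult_enum[OF bnd] by (metis of_int_eq_iff)
  then have m1: "mp = 1" "mm = 1" using eq unfolding Lp_def Lm_def by (auto simp: field_simps)
  have "(\<Sum>x\<in>#proots (char_poly A). Re x * log 2 (Re x)) = sum_list (map (\<lambda>x. Re x * log 2 (Re x)) as)"
    unfolding pr by (metis mset_map sum_mset_sum_list)
  also have "\<dots> = of_nat mp * (Lp * log 2 Lp) + of_nat mm * (Lm * log 2 Lm) + of_nat (count_list as 0) * 0"
    unfolding mp_def mm_def by (subst sum_list_3[OF set ne]) simp
  finally show ?thesis unfolding vn_entropy_def m1 by simp
qed


lemma sum2: "(\<Sum>k<2::nat. f k) = f 0 + (f 1 :: 'a::comm_monoid_add)" by (simp add: eval_nat_numeral)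
lemma sum3: "(\<Sum>k<3::nat. f k) = f 0 + f 1 + (f 2 :: 'a::comm_monoid_add)" by (simp add: eval_nat_numeral add.assoc)
lemma sum4: "(\<Sum>k<4::nat. f k) = f 0 + f 1 + f 2 + (f 3 :: 'a::comm_monoid_add)" by (simp add: eval_nat_numeral add.assoc)
lemma sum8: "(\<Sum>k<8::nat. f k) = f 0 + f 1 + f 2 + f 3 + f 4 + f 5 + f 6 + (f 7 :: 'a::comm_monoid_add)"
  by (simp add: eval_nat_numeral add.assoc)

lemma less2: "i < (2::nat) \<Longrightarrow> i = 0 \<or> i = 1" by auto
lemma less4: "i < (4::nat) \<Longrightarrow> i = 0 \<or> i = 1 \<or> i = 2 \<or> i = 3" by auto
lemma less8: "i < (8::nat) \<Longrightarrow> i = 0 \<or> i = 1 \<or> i = 2 \<or> i = 3 \<or> i = 4 \<or> i = 5 \<or> i = 6 \<or> i = 7" by auto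

definition sg :: "nat \<Rightarrow> complex" where "sg i = (if i = 7 then -11 else 1)"

lemma psi4_idx: "i < 8 \<Longrightarrow> psi4 $ i = - sg i / (8 * complex_of_real (sqrt 2))"
  unfolding psi4_def sg_def by simp

lemma sqrt2c: "complex_of_real (sqrt 2) * complex_of_real (sqrt 2) = 2"
proof -
  have "sqrt 2 * sqrt 2 = (2::real)" by simp
  then have "complex_of_real (sqrt 2 * sqrt 2) = 2" by simp
  then show ?thesis by (simp only: of_real_mult)
qed

lemma psi4_prod: "i < 8 \<Longrightarrow> j < 8 \<Longrightarrow> psi4 $ i * cnj (psi4 $ j) = sg i * sg j / 128"
proof -
  assume ij: "i < 8" "j < 8"
  have c: "cnj (sg j) = sg j" unfolding sg_def by simp
  have "psi4 $ i * cnj (psi4 $ j) = sg i * sg j / (64 * (complex_of_real (sqrt 2) * complex_of_real (sqrt 2)))"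
    using ij by (simp add: psi4_idx c)
  then show ?thesis unfolding sqrt2c by simp
qed

lemma rho4_eq: "rho4 = mat 8 8 (\<lambda>(i,j). sg i * sg j / 128)"
  unfolding rho4_def by (rule eq_matI) (auto simp: psi4_prod)

lemma rho4_pure: "rho4 = mat (dX*dY) (dX*dY) (\<lambda>(i,j). psi4 $ i * cnj (psi4 $ j))" if "dX * dY = 8"
  unfolding rho4_def that ..

lemma rho4_entropy: "vn_entropy rho4 = 0"
proof -
  have s: "1 * (\<Sum>k<8. psi4 $ k * cnj (psi4 $ k)) = 1"
    by (simp add: sum8 psi4_prod sg_def)
  have e: "rho4 = mat 8 8 (\<lambda>(i,j). 1 * (psi4 $ i * cnj (psi4 $ j)))" unfolding rho4_def by simp
  show ?thesis unfolding e by (rule idem_entropy_zero[of _ 8], simp, rule rank1_idem[OF s])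
qed

lemma sum3_perm: "perm_index ks i = qbit i 0 * 2 ^ (2 - ks ! 0) + qbit i 1 * 2 ^ (2 - ks ! 1) + qbit i 2 * 2 ^ (2 - ks ! 2)"
  unfolding perm_index_def by (simp add: sum3)

lemma reorder_rho4_gen:
  assumes p: "\<And>i. i < 8 \<Longrightarrow> perm_index ks i < 8 \<and> sg (perm_index ks i) = sg i"
  shows "reorder ks rho4 = rho4"
  unfolding reorder_def rho4_eq by (rule eq_matI) (auto simp: p)

lemma reorder_012: "reorder [0,1,2] rho4 = rho4"
proof (rule reorder_rho4_gen)
  fix i :: nat assume "i < 8"
  then show "perm_index [0,1,2] i < 8 \<and> sg (perm_index [0,1,2] i) = sg i"
    by (drule_tac less8) (elim disjE; simp add: sum3_perm qbit_def sg_def)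
qed

lemma reorder_102: "reorder [1,0,2] rho4 = rho4"
proof (rule reorder_rho4_gen)
  fix i :: nat assume "i < 8"
  then show "perm_index [1,0,2] i < 8 \<and> sg (perm_index [1,0,2] i) = sg i"
    by (drule_tac less8) (elim disjE; simp add: sum3_perm qbit_def sg_def)
qed

lemma reorder_201: "reorder [2,0,1] rho4 = rho4"
proof (rule reorder_rho4_gen)
  fix i :: nat assume "i < 8"
  then show "perm_index [2,0,1] i < 8 \<and> sg (perm_index [2,0,1] i) = sg i"
    by (drule_tac less8) (elim disjE; simp add: sum3_perm qbit_def sg_def)
qed

lemma reorder_021: "reorder [0,2,1] rho4 = rho4"
proof (rule reorder_rho4_gen)
  fix i :: nat assume "i < 8"
  then show "perm_index [0,2,1] i < 8 \<and> sg (perm_index [0,2,1] i) = sg i"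
    by (drule_tac less8) (elim disjE; simp add: sum3_perm qbit_def sg_def)
qed

lemma reorder_120: "reorder [1,2,0] rho4 = rho4"
proof (rule reorder_rho4_gen)
  fix i :: nat assume "i < 8"
  then show "perm_index [1,2,0] i < 8 \<and> sg (perm_index [1,2,0] i) = sg i"
    by (drule_tac less8) (elim disjE; simp add: sum3_perm qbit_def sg_def)
qed

definition A2 :: "complex mat" where
  "A2 = mat 2 2 (\<lambda>(i,j). if i = 0 \<and> j = 0 then 1/32 else if i = 1 \<and> j = 1 then 31/32 else -1/16)"

definition A4 :: "complex mat" where
  "A4 = mat 4 4 (\<lambda>(i,j). (if i = 3 \<and> j = 3 then 122 else if i = 3 \<or> j = 3 then -10 else 2) / 128)"

lemma rho_A4_eq: "rho_A4 = A2"
  unfolding rho_A4_def ptrace_Y_def A2_def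
proof (rule eq_matI)
  fix i j assume "i < dim_row (mat 2 2 (\<lambda>(i,j). if i = 0 \<and> j = 0 then 1/32 else if i = 1 \<and> j = 1 then 31/32 else -1/16 :: complex))"
    "j < dim_col (mat 2 2 (\<lambda>(i,j). if i = 0 \<and> j = 0 then 1/32 else if i = 1 \<and> j = 1 then 31/32 else -1/16 :: complex))"
  then have ij: "i < 2" "j < 2" by auto
  then show "mat 2 2 (\<lambda>(a, a'). \<Sum>b<4. rho4 $$ (a * 4 + b, a' * 4 + b)) $$ (i, j) =
         mat 2 2 (\<lambda>(i,j). if i = 0 \<and> j = 0 then 1/32 else if i = 1 \<and> j = 1 then 31/32 else -1/16 :: complex) $$ (i, j)"
    using less2[OF ij(1)] less2[OF ij(2)] by (elim disjE; simp add: sum4 rho4_eq sg_def)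
qed auto

lemma rho_A4B4_eq: "rho_A4B4 = A4"
  unfolding rho_A4B4_def ptrace_Y_def A4_def
proof (rule eq_matI)
  fix i j assume "i < dim_row (mat 4 4 (\<lambda>(i,j). (if i = 3 \<and> j = 3 then 122 else if i = 3 \<or> j = 3 then -10 else 2) / 128 :: complex))"
    "j < dim_col (mat 4 4 (\<lambda>(i,j). (if i = 3 \<and> j = 3 then 122 else if i = 3 \<or> j = 3 then -10 else 2) / 128 :: complex))"
  then have ij: "i < 4" "j < 4" by auto
  then show "mat 4 4 (\<lambda>(a, a'). \<Sum>b<2. rho4 $$ (a * 2 + b, a' * 2 + b)) $$ (i, j) =
         mat 4 4 (\<lambda>(i,j). (if i = 3 \<and> j = 3 then 122 else if i = 3 \<or> j = 3 then -10 else 2) / 128 :: complex) $$ (i, j)"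
    using less4[OF ij(1)] less4[OF ij(2)] by (elim disjE; simp add: sum2 rho4_eq sg_def)
qed auto

lemma A2_sq: "A2 * A2 = A2 - (27/1024) \<cdot>\<^sub>m 1\<^sub>m 2"
proof (rule eq_matI)
  fix i j assume "i < dim_row (A2 - (27/1024) \<cdot>\<^sub>m 1\<^sub>m 2)" "j < dim_col (A2 - (27/1024) \<cdot>\<^sub>m 1\<^sub>m 2)"
  then have ij: "i < 2" "j < 2" by (auto simp: A2_def)
  then show "(A2 * A2) $$ (i, j) = (A2 - (27/1024) \<cdot>\<^sub>m 1\<^sub>m 2) $$ (i, j)"
    using less2[OF ij(1)] less2[OF ij(2)] by (elim disjE; simp add: A2_def scalar_prod_def atLeast0LessThan sum2)
qed (auto simp: A2_def)

lemma A4_cube: "A4 * (A4 * A4) = A4 * A4 - (27/1024) \<cdot>\<^sub>m A4"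
proof -
  define G where "G = mat 4 4 (\<lambda>(i,j). if i = 3 \<and> j = 3 then 949/1024 else if i = 3 \<or> j = 3 then -5/64 else 7/1024 :: complex)"
  have G: "A4 * A4 = G"
  proof (rule eq_matI)
    fix i j assume "i < dim_row G" "j < dim_col G"
    then have ij: "i < 4" "j < 4" by (auto simp: G_def)
    then show "(A4 * A4) $$ (i, j) = G $$ (i, j)"
      using less4[OF ij(1)] less4[OF ij(2)] by (elim disjE; simp add: A4_def G_def scalar_prod_def atLeast0LessThan sum4)
  qed (auto simp: A4_def G_def)
  have "A4 * G = G - (27/1024) \<cdot>\<^sub>m A4"
  proof (rule eq_matI)
    fix i j assume "i < dim_row (G - (27/1024) \<cdot>\<^sub>m A4)" "j < dim_col (G - (27/1024) \<cdot>\<^sub>m A4)"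
    then have ij: "i < 4" "j < 4" by (auto simp: G_def A4_def)
    then show "(A4 * G) $$ (i, j) = (G - (27/1024) \<cdot>\<^sub>m A4) $$ (i, j)"
      using less4[OF ij(1)] less4[OF ij(2)] by (elim disjE; simp add: A4_def G_def scalar_prod_def atLeast0LessThan sum4)
  qed (auto simp: A4_def G_def)
  then show ?thesis unfolding G .
qed

lemma eig_comp:
  fixes A :: "complex mat"
  assumes A: "A \<in> carrier_mat n n" and x: "x \<in># proots (char_poly A)"
  shows "\<exists>v \<in> carrier_vec n. \<exists>i<n. v $ i \<noteq> 0 \<and> A *\<^sub>v v = x \<cdot>\<^sub>v v"
proof -
  obtain v where v: "v \<in> carrier_vec n" "v \<noteq> 0\<^sub>v n" "A *\<^sub>v v = x \<cdot>\<^sub>v v"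
    using root_eigvec[OF A x] by blast
  obtain i where "i < n" "v $ i \<noteq> 0" using v(1,2) by (metis eq_vecI carrier_vecD index_zero_vec(1,2))
  then show ?thesis using v by blast
qed

lemma A2c: "A2 \<in> carrier_mat 2 2" unfolding A2_def by simp
lemma A4c: "A4 \<in> carrier_mat 4 4" unfolding A4_def by simp

lemma roots_A2: assumes x: "x \<in># proots (char_poly A2)" shows "x * x = x - 27/1024"
proof -
  obtain v i where v: "v \<in> carrier_vec 2" "i < 2" "v $ i \<noteq> 0" "A2 *\<^sub>v v = x \<cdot>\<^sub>v v"
    using eig_comp[OF A2c x] by blast
  have "(A2 * A2) *\<^sub>v v = x \<cdot>\<^sub>v (x \<cdot>\<^sub>v v)"
    using v A2c by (simp add: mult_mat_vec[OF A2c])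
  moreover have "(A2 - (27/1024) \<cdot>\<^sub>m 1\<^sub>m 2) *\<^sub>v v = x \<cdot>\<^sub>v v - (27/1024) \<cdot>\<^sub>v v"
    using v A2c by (simp add: minus_mult_distrib_mat_vec[of _ 2 2] smult_mat_vec)
  ultimately have "(x \<cdot>\<^sub>v (x \<cdot>\<^sub>v v)) $ i = (x \<cdot>\<^sub>v v - (27/1024) \<cdot>\<^sub>v v) $ i"
    unfolding A2_sq by simp
  then have "x * x * v $ i = (x - 27/1024) * v $ i" using v by (simp add: algebra_simps)
  then show ?thesis using v(3) by simp
qed

lemma roots_A4: assumes x: "x \<in># proots (char_poly A4)" shows "x * (x * x) = x * x - 27/1024 * x"
proof -
  obtain v i where v: "v \<in> carrier_vec 4" "i < 4" "v $ i \<noteq> 0" "A4 *\<^sub>v v = x \<cdot>\<^sub>v v"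
    using eig_comp[OF A4c x] by blast
  have AA: "A4 * A4 \<in> carrier_mat 4 4" using A4c by simp
  have e1: "(A4 * A4) *\<^sub>v v = x \<cdot>\<^sub>v (x \<cdot>\<^sub>v v)"
    using v A4c by (simp add: mult_mat_vec[OF A4c])
  have "(A4 * (A4 * A4)) *\<^sub>v v = A4 *\<^sub>v ((A4 * A4) *\<^sub>v v)"
    using assoc_mult_mat_vec[OF A4c AA v(1)] .
  also have "\<dots> = x \<cdot>\<^sub>v (x \<cdot>\<^sub>v (x \<cdot>\<^sub>v v))" unfolding e1 using v A4c by (simp add: mult_mat_vec[OF A4c])
  finally have "(A4 * (A4 * A4)) *\<^sub>v v = x \<cdot>\<^sub>v (x \<cdot>\<^sub>v (x \<cdot>\<^sub>v v))" .
  moreover have "(A4 * A4 - (27/1024) \<cdot>\<^sub>m A4) *\<^sub>v v = x \<cdot>\<^sub>v (x \<cdot>\<^sub>v v) - (27/1024) \<cdot>\<^sub>v (x \<cdot>\<^sub>v v)"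
    using v A4c AA e1 by (simp add: minus_mult_distrib_mat_vec[of _ 4 4] smult_mat_vec)
  ultimately have "(x \<cdot>\<^sub>v (x \<cdot>\<^sub>v (x \<cdot>\<^sub>v v))) $ i = (x \<cdot>\<^sub>v (x \<cdot>\<^sub>v v) - (27/1024) \<cdot>\<^sub>v (x \<cdot>\<^sub>v v)) $ i"
    unfolding A4_cube by simp
  then have "x * (x * x) * v $ i = (x * x - 27/1024 * x) * v $ i" using v by (simp add: algebra_simps)
  then show ?thesis using v(3) by simp
qed

lemma quad_sol:
  fixes x :: complex assumes "x * x = x - 27/1024"
  shows "x = complex_of_real Lp \<or> x = complex_of_real Lm"
proof -
  have s: "Lp + Lm = 1" "Lp * Lm = 27/1024" unfolding Lp_def Lm_def by (simp_all add: field_simps)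
  have "(x - complex_of_real Lp) * (x - complex_of_real Lm) = x * x - complex_of_real (Lp + Lm) * x + complex_of_real (Lp * Lm)"
    by (simp add: algebra_simps)
  also have "\<dots> = 0" unfolding s using assms by simp
  finally show ?thesis by simp
qed

lemma entropy_A2: "vn_entropy A2 = - Lp * log 2 Lp - Lm * log 2 Lm"
proof (rule spectral_fin[OF A2c])
  show "mtrace A2 = 1" unfolding A2_def mtrace_def by (simp add: sum2)
  fix x assume "x \<in># proots (char_poly A2)"
  then show "x = complex_of_real Lp \<or> x = complex_of_real Lm \<or> x = 0" using quad_sol roots_A2 by blast
qed simp

lemma entropy_A4: "vn_entropy A4 = - Lp * log 2 Lp - Lm * log 2 Lm"
proof (rule spectral_fin[OF A4c])
  show "mtrace A4 = 1" unfolding A4_def mtrace_def by (simp add: sum4)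
  fix x assume x: "x \<in># proots (char_poly A4)"
  show "x = complex_of_real Lp \<or> x = complex_of_real Lm \<or> x = 0"
  proof (cases "x = 0")
    case False
    have "x * (x * x) = x * (x - 27/1024)" using roots_A4[OF x] by (simp add: algebra_simps)
    then have "x * x = x - 27/1024" using False by simp
    then show ?thesis using quad_sol by blast
  qed simp
qed simp

lemma d24: "discord 2 4 rho4 = vn_entropy rho_A4"
proof -
  have R: "rho4 = mat (2*4) (2*4) (\<lambda>(i,j). psi4 $ i * cnj (psi4 $ j))" by (rule rho4_pure) simp
  have "discord 2 4 rho4 = vn_entropy (ptrace_Y 2 4 rho4) - vn_entropy rho4"
    using discord_pure[of 2 4 "\<lambda>i. psi4 $ i"] unfolding R[symmetric] .
  then show ?thesis by (simp add: rho4_entropy rho_A4_def)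
qed

lemma d42: "discord 4 2 rho4 = vn_entropy rho_A4B4"
proof -
  have R: "rho4 = mat (4*2) (4*2) (\<lambda>(i,j). psi4 $ i * cnj (psi4 $ j))" by (rule rho4_pure) simp
  have "discord 4 2 rho4 = vn_entropy (ptrace_Y 4 2 rho4) - vn_entropy rho4"
    using discord_pure[of 4 2 "\<lambda>i. psi4 $ i"] unfolding R[symmetric] .
  then show ?thesis by (simp add: rho4_entropy rho_A4B4_def)
qed

theorem lemma4:
  defines "v \<equiv> - (1/32) * (16 + sqrt 229) * log 2 ((1/32) * (16 + sqrt 229))
                - (1/32) * (16 - sqrt 229) * log 2 ((1/32) * (16 - sqrt 229))"
  shows "discord3 [1, 2] [0] rho4 = discord3 [0, 2] [1] rho4
       \<and> discord3 [0, 2] [1] rho4 = discord3 [0, 1] [2] rho4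
       \<and> discord3 [0, 1] [2] rho4 = discord3 [2] [0, 1] rho4
       \<and> discord3 [2] [0, 1] rho4 = discord3 [1] [0, 2] rho4
       \<and> discord3 [1] [0, 2] rho4 = discord3 [0] [1, 2] rho4
       \<and> discord3 [0] [1, 2] rho4 = v
       \<and> discord3 [1, 2] [0] rho4 = vn_entropy rho_A4
       \<and> discord3 [2] [0, 1] rho4 = vn_entropy rho_A4B4"
proof -
  have v: "v = - Lp * log 2 Lp - Lm * log 2 Lm" unfolding v_def Lp_def Lm_def by simp
  have e1: "discord3 [1, 2] [0] rho4 = vn_entropy rho_A4"
  proof -
    have "discord3 [1, 2] [0] rho4 = discord 2 4 (reorder [0,1,2] rho4)" unfolding discord3_def by simp
    also have "\<dots> = vn_entropy rho_A4" by (simp only: reorder_012 d24)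
    finally show ?thesis .
  qed
  have e2: "discord3 [0, 2] [1] rho4 = vn_entropy rho_A4"
  proof -
    have "discord3 [0, 2] [1] rho4 = discord 2 4 (reorder [1,0,2] rho4)" unfolding discord3_def by simp
    also have "\<dots> = vn_entropy rho_A4" by (simp only: reorder_102 d24)
    finally show ?thesis .
  qed
  have e3: "discord3 [0, 1] [2] rho4 = vn_entropy rho_A4"
  proof -
    have "discord3 [0, 1] [2] rho4 = discord 2 4 (reorder [2,0,1] rho4)" unfolding discord3_def by simp
    also have "\<dots> = vn_entropy rho_A4" by (simp only: reorder_201 d24)
    finally show ?thesis .
  qed
  have e4: "discord3 [2] [0, 1] rho4 = vn_entropy rho_A4B4"
  proof -
    have "discord3 [2] [0, 1] rho4 = discord 4 2 (reorder [0,1,2] rho4)" unfolding discord3_def by simp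
    also have "\<dots> = vn_entropy rho_A4B4" by (simp only: reorder_012 d42)
    finally show ?thesis .
  qed
  have e5: "discord3 [1] [0, 2] rho4 = vn_entropy rho_A4B4"
  proof -
    have "discord3 [1] [0, 2] rho4 = discord 4 2 (reorder [0,2,1] rho4)" unfolding discord3_def by simp
    also have "\<dots> = vn_entropy rho_A4B4" by (simp only: reorder_021 d42)
    finally show ?thesis .
  qed
  have e6: "discord3 [0] [1, 2] rho4 = vn_entropy rho_A4B4"
  proof -
    have "discord3 [0] [1, 2] rho4 = discord 4 2 (reorder [1,2,0] rho4)" unfolding discord3_def by simp
    also have "\<dots> = vn_entropy rho_A4B4" by (simp only: reorder_120 d42)
    finally show ?thesis .
  qed
  have h1: "vn_entropy rho_A4 = v" unfolding v rho_A4_eq by (rule entropy_A2)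
  have h2: "vn_entropy rho_A4B4 = v" unfolding v rho_A4B4_eq by (rule entropy_A4)
  show ?thesis unfolding e1 e2 e3 e4 e5 e6 h1 h2 by simp
qed

end
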